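(* For every $\delta>0$ and $n\in\mathbb{N}$ there exists $N\in\mathbb{N}$ such that the following holds. Let $I$, $J$, $K$ be sets each with at least $N$ elements, let $X$ be a finite set, and for all $i\in I$, $j\in J$, $k\in K$ let $X_{ijk}\subseteq X$ satisfy $|X_{ijk}|\ge\delta|X|$. Then there exist $x\in X$ and subsets $I'\subseteq I$, $J'\subseteq J$, $K'\subseteq K$, each with at least $n$ elements, such that $x\in X_{ijk}$ for all $i\in I'$, $j\in J'$, $k\in K'$. *)

theory Defs
  imports Complex_Main
begin

text \<open>A set has at least n elements (the set may be infinite).\<close>
definition at_least :: "nat \<Rightarrow> 'a set \<Rightarrow> bool" where
  "at_least n A \<longleftrightarrow> (\<exists>B\<subseteq>A. finite B \<and> card B \<ge> n)"

end

theory Submission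
  imports Defs
begin

lemma double_count:
  fixes Nb :: "'a \<Rightarrow> 'k set"
  assumes "finite K" "finite G" "\<forall>a\<in>G. Nb a \<subseteq> K"
  shows "(\<Sum>k\<in>K. card {a\<in>G. k \<in> Nb a}) = (\<Sum>a\<in>G. card (Nb a))"
proof -
  have "(\<Sum>k\<in>K. card {a\<in>G. k \<in> Nb a}) = (\<Sum>k\<in>K. \<Sum>a\<in>G. of_bool (k \<in> Nb a))"
  proof (rule sum.cong)
    fix k
    have e1: "G \<inter> {a. k \<in> Nb a} = {a\<in>G. k \<in> Nb a}" by blast
    have "(\<Sum>a\<in>G. (of_bool (k \<in> Nb a) :: nat)) = of_nat (card (G \<inter> {a. k \<in> Nb a}))"
      using assms(2) by simp
    thus "card {a\<in>G. k \<in> Nb a} = (\<Sum>a\<in>G. of_bool (k \<in> Nb a))"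
      unfolding e1 of_nat_id by simp
  qed simp
  also have "\<dots> = (\<Sum>a\<in>G. \<Sum>k\<in>K. of_bool (k \<in> Nb a))" by (rule sum.swap)
  also have "\<dots> = (\<Sum>a\<in>G. card (Nb a))"
  proof (rule sum.cong)
    fix a assume "a \<in> G"
    then have "K \<inter> {k. k \<in> Nb a} = Nb a" using assms by auto
    then show "(\<Sum>k\<in>K. of_bool (k \<in> Nb a)) = card (Nb a)" using assms by simp
  qed simp
  finally show ?thesis .
qed

lemma core:
  fixes Nb :: "'a \<Rightarrow> 'k set" and N :: nat
  assumes "finite K" "card K \<le> N" "N > 0" "finite G" "G \<noteq> {}" "m \<ge> n"
    "\<forall>a\<in>G. Nb a \<subseteq> K \<and> card (Nb a) \<ge> m"
  shows "\<exists>F\<subseteq>K. card F = n \<and> (\<exists>G'\<subseteq>G. real (card G') \<ge> real (card G) * ((real m - real n) / N) ^ n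
           \<and> (\<forall>a\<in>G'. F \<subseteq> Nb a))"
  using assms
proof (induction n arbitrary: K G m Nb)
  case 0
  then show ?case by (intro exI[of _ "{}"]) auto
next
  case (Suc n)
  obtain a0 where a0: "a0 \<in> G" using Suc.prems by auto
  have finNb: "finite (Nb a)" if "a \<in> G" for a using Suc.prems that finite_subset by blast
  have "card (Nb a0) \<ge> 1" using Suc.prems a0 by force
  hence "Nb a0 \<noteq> {}" by auto
  hence Kne: "K \<noteq> {}" using Suc.prems a0 by blast
  define c where "c k = card {a\<in>G. k \<in> Nb a}" for k
  have dc: "(\<Sum>k\<in>K. c k) = (\<Sum>a\<in>G. card (Nb a))"
    unfolding c_def using double_count[of K G Nb] Suc.prems by blast
  have "(\<Sum>a\<in>G. m) \<le> (\<Sum>a\<in>G. card (Nb a))" using Suc.prems by (intro sum_mono) auto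
  hence sumge: "card G * m \<le> (\<Sum>k\<in>K. c k)" using dc by simp
  have "\<exists>k\<in>K. card G * m \<le> c k * N"
  proof (rule ccontr)
    assume "\<not> ?thesis"
    hence "\<forall>k\<in>K. c k * N < card G * m" by auto
    hence "(\<Sum>k\<in>K. c k * N) < (\<Sum>k\<in>K. card G * m)"
      using Kne Suc.prems by (intro sum_strict_mono) auto
    hence "(\<Sum>k\<in>K. c k) * N < card K * (card G * m)" by (simp add: sum_distrib_right)
    also have "\<dots> \<le> N * (card G * m)" using Suc.prems by simp
    finally have "(\<Sum>k\<in>K. c k) < card G * m" by simp
    thus False using sumge by simp
  qed
  then obtain k where k: "k \<in> K" "card G * m \<le> c k * N" by blast
  define G1 where "G1 = {a\<in>G. k \<in> Nb a}"
  have cG1: "card G1 = c k" unfolding G1_def c_def by simp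
  have "card G * m > 0" using Suc.prems by (simp add: card_gt_0_iff)
  hence "c k > 0" using k by (metis gr0I mult_is_0 not_le)
  hence G1ne: "G1 \<noteq> {}" using cG1 by auto
  have G1fin: "finite G1" unfolding G1_def using Suc.prems by simp
  have hyp: "\<forall>a\<in>G1. Nb a - {k} \<subseteq> K - {k} \<and> card (Nb a - {k}) \<ge> m - 1"
    using Suc.prems unfolding G1_def by (auto simp: card_Diff_singleton finNb)
  have "m - 1 \<ge> n" using Suc.prems by simp
  moreover have "card (K - {k}) \<le> N" using Suc.prems k by (simp add: card_Diff_singleton)
  ultimately have "\<exists>F\<subseteq>K - {k}. card F = n \<and> (\<exists>G'\<subseteq>G1. real (card G') \<ge> real (card G1) * ((real (m - 1) - real n) / N) ^ n
           \<and> (\<forall>a\<in>G'. F \<subseteq> Nb a - {k}))"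
    using Suc.prems G1ne G1fin hyp by (intro Suc.IH) auto
  then obtain F1 G' where
    F1: "F1 \<subseteq> K - {k}" "card F1 = n" and G': "G' \<subseteq> G1"
    "real (card G') \<ge> real (card G1) * ((real (m - 1) - real n) / N) ^ n"
    "\<forall>a\<in>G'. F1 \<subseteq> Nb a - {k}" by blast
  define q where "q = (real m - real (Suc n)) / N"
  have q0: "q \<ge> 0" unfolding q_def using Suc.prems by simp
  have qeq: "(real (m - 1) - real n) / N = q" unfolding q_def using Suc.prems by (simp add: of_nat_diff)
  have "real (card G) * m \<le> real (card G1) * N" using k cG1 by (metis of_nat_le_iff of_nat_mult)
  hence "real (card G) * (m / N) \<le> real (card G1)" using Suc.prems by (simp add: field_simps)
  moreover have "q \<le> m / N" unfolding q_def using Suc.prems by (simp add: divide_right_mono)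
  ultimately have "real (card G) * q \<le> real (card G1)"
    by (meson dual_order.trans mult_left_mono of_nat_0_le_iff)
  hence "real (card G) * q * q ^ n \<le> real (card G1) * q ^ n" using q0 by (simp add: mult_right_mono)
  also have "\<dots> \<le> real (card G')" using G' qeq by simp
  finally have cardG': "real (card G') \<ge> real (card G) * q ^ Suc n" by (simp add: mult.assoc) have "finite F1" using F1 Suc.prems finite_subset by blast
  moreover have "k \<notin> F1" using F1 by blast
  ultimately have "insert k F1 \<subseteq> K" "card (insert k F1) = Suc n"
    using F1 k by auto
  moreover have "G' \<subseteq> G" using G' G1_def by auto
  moreover have "\<forall>a\<in>G'. insert k F1 \<subseteq> Nb a" using G' G1_def by auto
  ultimately show ?case using cardG' unfolding q_def by blast
qed

lemma rows:
  fixes P :: "'a \<Rightarrow> 'k \<Rightarrow> bool" and \<epsilon> :: real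
  assumes "finite A" "A \<noteq> {}" "finite K" "card K > 0" "\<epsilon> > 0" "\<epsilon> * card K \<ge> 4 * n"
    "(\<Sum>a\<in>A. real (card {k\<in>K. P a k})) \<ge> \<epsilon> * card A * card K"
  shows "\<exists>F\<subseteq>K. card F = n \<and> (\<exists>G'\<subseteq>A. real (card G') \<ge> (\<epsilon>/2) * (\<epsilon>/4)^n * card A
            \<and> (\<forall>a\<in>G'. \<forall>k\<in>F. P a k))"
proof -
  define N where "N = card K"
  define d where "d a = card {k\<in>K. P a k}" for a
  have dle: "d a \<le> N" for a unfolding d_def N_def using assms by (intro card_mono) auto
  define G where "G = {a\<in>A. real (d a) \<ge> \<epsilon> * N / 2}"
  have GA: "G \<subseteq> A" unfolding G_def by auto
  have finG: "finite G" using GA assms finite_subset by blast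
  have "(\<Sum>a\<in>A. real (d a)) = (\<Sum>a\<in>A - G. real (d a)) + (\<Sum>a\<in>G. real (d a))"
    by (rule sum.subset_diff[OF GA assms(1)])
  also have "\<dots> = (\<Sum>a\<in>G. real (d a)) + (\<Sum>a\<in>A - G. real (d a))" by (rule add.commute)
  also have "(\<Sum>a\<in>G. real (d a)) \<le> (\<Sum>a\<in>G. real N)" using dle by (intro sum_mono) auto
  also have "(\<Sum>a\<in>A - G. real (d a)) \<le> (\<Sum>a\<in>A - G. \<epsilon> * N / 2)"
    unfolding G_def by (intro sum_mono) auto
  also have "(\<Sum>a\<in>A - G. \<epsilon> * N / 2) \<le> (\<Sum>a\<in>A. \<epsilon> * N / 2)"
    using assms by (intro sum_mono2) auto
  finally have "(\<Sum>a\<in>A. real (d a)) \<le> card G * real N + card A * (\<epsilon> * N / 2)" by simp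
  with assms(7) have "\<epsilon> * card A * N \<le> card G * real N + card A * (\<epsilon> * N / 2)"
    unfolding d_def N_def by simp
  hence "(\<epsilon> / 2 * card A) * N \<le> card G * real N" by (simp add: algebra_simps)
  moreover have "real N > 0" using assms unfolding N_def by simp
  ultimately have cG: "\<epsilon> / 2 * card A \<le> card G" by (rule mult_right_le_imp_le)
  have "card A > 0" using assms by (simp add: card_gt_0_iff)
  hence "\<epsilon> / 2 * card A > 0" using assms by simp
  hence Gne: "G \<noteq> {}" using cG by auto
  define m where "m = nat \<lceil>\<epsilon> * N / 2\<rceil>"
  have mge: "real m \<ge> \<epsilon> * N / 2" unfolding m_def by linarith
  have "real m \<ge> 2 * n" using mge assms unfolding N_def by linarith
  hence mn: "m \<ge> n" by linarith
  have hyp: "\<forall>a\<in>G. {k\<in>K. P a k} \<subseteq> K \<and> card {k\<in>K. P a k} \<ge> m"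
  proof
    fix a assume "a \<in> G"
    hence "real (d a) \<ge> \<epsilon> * N / 2" unfolding G_def by auto
    hence "d a \<ge> m" unfolding m_def by linarith
    thus "{k\<in>K. P a k} \<subseteq> K \<and> card {k\<in>K. P a k} \<ge> m" unfolding d_def by auto
  qed
  from core[of K N G n m "\<lambda>a. {k\<in>K. P a k}"] obtain F G' where
    F: "F \<subseteq> K" "card F = n" and G': "G' \<subseteq> G"
    "real (card G') \<ge> real (card G) * ((real m - real n) / N) ^ n"
    "\<forall>a\<in>G'. F \<subseteq> {k\<in>K. P a k}"
    using assms finG Gne mn hyp unfolding N_def by blast
  have Npos: "real N > 0" using assms N_def by simp
  have "\<epsilon> / 4 \<le> (real m - real n) / N"
    using mge assms Npos unfolding N_def by (simp add: field_simps)
  hence "(\<epsilon> / 4) ^ n \<le> ((real m - real n) / N) ^ n" using assms by (intro power_mono) auto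
  hence "(\<epsilon>/2) * card A * (\<epsilon> / 4) ^ n \<le> real (card G) * ((real m - real n) / N) ^ n"
    using cG assms by (intro mult_mono) auto
  with G' have bnd: "real (card G') \<ge> (\<epsilon>/2) * (\<epsilon>/4)^n * card A" by (simp add: algebra_simps)
  have sub: "G' \<subseteq> A" using G' GA by auto
  have allP: "\<forall>a\<in>G'. \<forall>k\<in>F. P a k" using G'(3) by auto
  show ?thesis
    by (rule exI[of _ F], intro conjI F exI[of _ G'] sub bnd allP)
qed

lemma exact_sub:
  assumes "at_least N I"
  shows "\<exists>I0\<subseteq>I. finite I0 \<and> card I0 = N"
proof -
  obtain B where "B \<subseteq> I" "finite B" "card B \<ge> N" using assms unfolding at_least_def by blast
  then obtain T where "T \<subseteq> B" "card T = N" "finite T" by (metis obtain_subset_with_card_n)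
  thus ?thesis using \<open>B \<subseteq> I\<close> by blast
qed

lemma fiber_sum:
  assumes "G \<subseteq> I0 \<times> J0" "finite I0" "finite J0"
  shows "card G = (\<Sum>i\<in>I0. card {j\<in>J0. (i, j) \<in> G})"
proof -
  have "G = (SIGMA i:I0. {j\<in>J0. (i, j) \<in> G})" using assms by auto
  moreover have "card (SIGMA i:I0. {j\<in>J0. (i, j) \<in> G}) = (\<Sum>i\<in>I0. card {j\<in>J0. (i, j) \<in> G})"
    using assms by (intro card_SigmaI) auto
  ultimately show ?thesis by simp
qed

theorem lemma4p1:
  fixes \<delta> :: real and n :: nat
  assumes "\<delta> > 0"
  shows "\<exists>N::nat. \<forall>(I::'i set) (J::'j set) (K::'k set) (X::'x set)
            (S::'i \<Rightarrow> 'j \<Rightarrow> 'k \<Rightarrow> 'x set).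
     at_least N I \<and> at_least N J \<and> at_least N K \<and> finite X \<and> X \<noteq> {} \<and>
     (\<forall>i\<in>I. \<forall>j\<in>J. \<forall>k\<in>K. S i j k \<subseteq> X \<and> real (card (S i j k)) \<ge> \<delta> * real (card X))
     \<longrightarrow> (\<exists>x\<in>X. \<exists>I'\<subseteq>I. \<exists>J'\<subseteq>J. \<exists>K'\<subseteq>K.
            at_least n I' \<and> at_least n J' \<and> at_least n K' \<and>
            (\<forall>i\<in>I'. \<forall>j\<in>J'. \<forall>k\<in>K'. x \<in> S i j k))"
proof -
  define c where "c = (\<delta>/2) * (\<delta>/4)^n"
  define c' where "c' = (c/2) * (c/4)^n"
  have cpos: "c > 0" unfolding c_def using assms by simp
  have c'pos: "c' > 0" unfolding c'_def using cpos by simp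
  define N where "N = nat \<lceil>4*n/\<delta> + 4*n/c + n/c'\<rceil> + 1"
  have Nge: "real N \<ge> 4*n/\<delta> + 4*n/c + n/c'" unfolding N_def by linarith
  have h1: "4*n/\<delta> \<ge> 0" "4*n/c \<ge> 0" "n/c' \<ge> 0" using assms cpos c'pos by auto
  have N1: "\<delta> * N \<ge> 4 * n"
  proof -
    have "real N \<ge> 4*n/\<delta>" using Nge h1 by linarith
    thus ?thesis using assms by (simp add: field_simps)
  qed
  have N2: "c * N \<ge> 4 * n"
  proof -
    have "real N \<ge> 4*n/c" using Nge h1 by linarith
    thus ?thesis using cpos by (simp add: field_simps)
  qed
  have N3: "c' * N \<ge> n"
  proof -
    have "real N \<ge> n/c'" using Nge h1 by linarith
    thus ?thesis using c'pos by (simp add: field_simps)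
  qed
  have Npos: "N > 0" unfolding N_def by simp
  show ?thesis
  proof (rule exI[of _ N], intro allI impI)
    fix I :: "'i set" and J :: "'j set" and K :: "'k set" and X :: "'x set"
      and S :: "'i \<Rightarrow> 'j \<Rightarrow> 'k \<Rightarrow> 'x set"
    assume H: "at_least N I \<and> at_least N J \<and> at_least N K \<and> finite X \<and> X \<noteq> {} \<and>
     (\<forall>i\<in>I. \<forall>j\<in>J. \<forall>k\<in>K. S i j k \<subseteq> X \<and> real (card (S i j k)) \<ge> \<delta> * real (card X))"
    obtain I0 where I0: "I0 \<subseteq> I" "finite I0" "card I0 = N" using H exact_sub by blast
    obtain J0 where J0: "J0 \<subseteq> J" "finite J0" "card J0 = N" using H exact_sub by blast
    obtain K0 where K0: "K0 \<subseteq> K" "finite K0" "card K0 = N" using H exact_sub by blast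
    have finX: "finite X" and Xne: "X \<noteq> {}" using H by auto
    define T where "T = I0 \<times> J0"
    have finT: "finite T" unfolding T_def using I0 J0 by simp
    have cardT: "card T = N * N" unfolding T_def using I0 J0 by (simp add: card_cartesian_product)
    define f where "f x p = card {k\<in>K0. x \<in> S (fst p) (snd p) k}" for x p
    have "(\<Sum>x\<in>X. \<Sum>p\<in>T. f x p) = (\<Sum>p\<in>T. \<Sum>x\<in>X. f x p)" by (rule sum.swap)
    also have "\<dots> = (\<Sum>p\<in>T. \<Sum>k\<in>K0. card (S (fst p) (snd p) k))"
    proof (rule sum.cong)
      fix p assume "p \<in> T"
      hence "fst p \<in> I" "snd p \<in> J" using I0 J0 unfolding T_def by auto
      hence "\<forall>k\<in>K0. S (fst p) (snd p) k \<subseteq> X" using H K0 by blast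
      thus "(\<Sum>x\<in>X. f x p) = (\<Sum>k\<in>K0. card (S (fst p) (snd p) k))"
        unfolding f_def using double_count[of X K0 "\<lambda>k. S (fst p) (snd p) k"] finX K0 by blast
    qed simp
    finally have eq0: "(\<Sum>x\<in>X. \<Sum>p\<in>T. f x p) = (\<Sum>p\<in>T. \<Sum>k\<in>K0. card (S (fst p) (snd p) k))" .
    have eq: "(\<Sum>x\<in>X. real (\<Sum>p\<in>T. f x p)) = (\<Sum>p\<in>T. \<Sum>k\<in>K0. real (card (S (fst p) (snd p) k)))"
      unfolding of_nat_sum[symmetric] eq0 ..
    have "(\<Sum>p\<in>T. \<Sum>k\<in>K0. \<delta> * card X) \<le> (\<Sum>p\<in>T. \<Sum>k\<in>K0. real (card (S (fst p) (snd p) k)))"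
    proof (intro sum_mono)
      fix p k assume "p \<in> T" "k \<in> K0"
      hence "fst p \<in> I" "snd p \<in> J" "k \<in> K" using I0 J0 K0 unfolding T_def by auto
      thus "\<delta> * card X \<le> real (card (S (fst p) (snd p) k))"
        using H by blast
    qed
    hence tot: "real (card T) * real (card K0) * (\<delta> * card X) \<le> (\<Sum>x\<in>X. real (\<Sum>p\<in>T. f x p))"
      unfolding eq by simp
    have "\<exists>x\<in>X. real (\<Sum>p\<in>T. f x p) \<ge> \<delta> * card T * card K0"
    proof (rule ccontr)
      assume "\<not> ?thesis"
      hence "\<forall>x\<in>X. real (\<Sum>p\<in>T. f x p) < \<delta> * card T * card K0" by auto
      hence "(\<Sum>x\<in>X. real (\<Sum>p\<in>T. f x p)) < (\<Sum>x\<in>X. \<delta> * card T * card K0)"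
        using finX Xne by (intro sum_strict_mono) auto
      thus False using tot by (simp add: algebra_simps)
    qed
    then obtain x where x: "x \<in> X" "real (\<Sum>p\<in>T. f x p) \<ge> \<delta> * card T * card K0" by blast
    have "T \<noteq> {}" using cardT Npos by auto
    then have "\<exists>F\<subseteq>K0. card F = n \<and> (\<exists>G'\<subseteq>T. real (card G') \<ge> (\<delta>/2) * (\<delta>/4)^n * card T
            \<and> (\<forall>a\<in>G'. \<forall>k\<in>F. x \<in> S (fst a) (snd a) k))"
      using finT K0 assms N1 x Npos
      by (intro rows) (auto simp: f_def)
    then obtain K' G' where K': "K' \<subseteq> K0" "card K' = n" and G': "G' \<subseteq> T"
      "real (card G') \<ge> c * card T" "\<forall>a\<in>G'. \<forall>k\<in>K'. x \<in> S (fst a) (snd a) k"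
      unfolding c_def by blast
    have "card G' = (\<Sum>i\<in>I0. card {j\<in>J0. (i, j) \<in> G'})"
      using G' I0 J0 unfolding T_def by (intro fiber_sum) auto
    hence sG: "(\<Sum>i\<in>I0. real (card {j\<in>J0. (i, j) \<in> G'})) \<ge> c * card I0 * card J0"
      using G' cardT I0 J0 by (simp add: algebra_simps)
    have "I0 \<noteq> {}" using I0 Npos by auto
    then have "\<exists>F\<subseteq>J0. card F = n \<and> (\<exists>G''\<subseteq>I0. real (card G'') \<ge> (c/2) * (c/4)^n * card I0
            \<and> (\<forall>a\<in>G''. \<forall>k\<in>F. (a, k) \<in> G'))"
      using I0 J0 cpos N2 Npos sG by (intro rows) auto
    then obtain J' I' where J': "J' \<subseteq> J0" "card J' = n" and I': "I' \<subseteq> I0"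
      "real (card I') \<ge> c' * card I0" "\<forall>i\<in>I'. \<forall>j\<in>J'. (i, j) \<in> G'"
      unfolding c'_def by blast
    have "real (card I') \<ge> n" using I' I0 N3 by simp
    hence "at_least n I'" unfolding at_least_def using I' I0 finite_subset by fastforce
    moreover have "at_least n J'" unfolding at_least_def using J' J0 finite_subset by fastforce
    moreover have "at_least n K'" unfolding at_least_def using K' K0 finite_subset by fastforce
    moreover have "\<forall>i\<in>I'. \<forall>j\<in>J'. \<forall>k\<in>K'. x \<in> S i j k" using I' G' by fastforce
    moreover have "I' \<subseteq> I" "J' \<subseteq> J" "K' \<subseteq> K" using I' I0 J' J0 K' K0 by auto
    ultimately show "\<exists>x\<in>X. \<exists>I'\<subseteq>I. \<exists>J'\<subseteq>J. \<exists>K'\<subseteq>K.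
            at_least n I' \<and> at_least n J' \<and> at_least n K' \<and>
            (\<forall>i\<in>I'. \<forall>j\<in>J'. \<forall>k\<in>K'. x \<in> S i j k)" using x by blast
  qed
qed

end
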